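(* Every surjective closed map and every surjective open map in $\mathbf{CLS}$ is an effective descent morphism in $\mathbf{CLS}$.
   Context: A closure space is a pair $(A,\mathcal{C}_A)$ where $A$ is a set and $\mathcal{C}_A$ is a set of subsets of $A$ closed under arbitrary intersections (so $A\in\mathcal{C}_A$); elements of $\mathcal{C}_A$ are called closed. $\mathbf{CLS}$ has closure spaces as objects and, as morphisms $\alpha:A\to B$, maps with $\alpha^{-1}(B')\in\mathcal{C}_A$ for all $B'\in\mathcal{C}_B$. A morphism $p:E\to B$ is closed if $p(Y)\in\mathcal{C}_B$ for all $Y\in\mathcal{C}_E$, and open if $B\setminus p(Y)\in\mathcal{C}_B$ whenever $E\setminus Y\in\mathcal{C}_E$. For a morphism $p:E\to B$ in a category with pullbacks, a descent data for $p$ is a triple $(C,\gamma,\xi)$ with $\gamma:C\to E$, $\xi:E\times_BC\to C$ (pullback of $p$ and $p\gamma$, projections $\pi_1,\pi_2$) such that $\gamma\xi=\pi_1$, $\xi\langle\gamma,1_C\rangle=1_C$, $\xi\circ(E\times_B\xi)=\xi\circ(E\times_B\pi_2)$; morphisms are maps $f:C\to C'$ with $\gamma'f=\gamma$, $f\xi=\xi'(E\times_Bf)$. The comparison functor $K^p:(\mathbf{C}\downarrow B)\to\mathrm{Des}(p)$ is $K^p(A,\alpha)=(E\times_BA,\pi_1,E\times_B\pi_2)$, and $p$ is an effective descent morphism if $K^p$ is an equivalence of categories. *)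

theory Defs
  imports Main
begin

type_synonym 'a cls = "'a set \<times> 'a set set"

abbreviation carrier :: "'a cls \<Rightarrow> 'a set" where "carrier X \<equiv> fst X"
abbreviation closed :: "'a cls \<Rightarrow> 'a set set" where "closed X \<equiv> snd X"

text \<open>Closed under arbitrary intersections; the empty intersection is the carrier.\<close>
definition closure_space :: "'a cls \<Rightarrow> bool" where
  "closure_space X \<longleftrightarrow> closed X \<subseteq> Pow (carrier X) \<and>
     (\<forall>S. S \<subseteq> closed X \<longrightarrow> carrier X \<inter> \<Inter>S \<in> closed X)"

definition cls_mor :: "'a cls \<Rightarrow> 'b cls \<Rightarrow> ('a \<Rightarrow> 'b) \<Rightarrow> bool" where
  "cls_mor X Y f \<longleftrightarrow> (\<forall>x\<in>carrier X. f x \<in> carrier Y) \<and>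
     (\<forall>Z\<in>closed Y. {x\<in>carrier X. f x \<in> Z} \<in> closed X)"

definition closed_mor :: "'a cls \<Rightarrow> 'b cls \<Rightarrow> ('a \<Rightarrow> 'b) \<Rightarrow> bool" where
  "closed_mor E B p \<longleftrightarrow> cls_mor E B p \<and> (\<forall>Y\<in>closed E. p ` Y \<in> closed B)"

definition open_mor :: "'a cls \<Rightarrow> 'b cls \<Rightarrow> ('a \<Rightarrow> 'b) \<Rightarrow> bool" where
  "open_mor E B p \<longleftrightarrow> cls_mor E B p \<and>
     (\<forall>Y. Y \<subseteq> carrier E \<longrightarrow> carrier E - Y \<in> closed E \<longrightarrow> carrier B - p ` Y \<in> closed B)"

text \<open>The (standard) pullback of p : E \<rightarrow> B and q : C \<rightarrow> B in CLS: the fibre product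
  with the initial closure structure w.r.t. the two projections.\<close>
definition pb_carrier :: "('e \<Rightarrow> 'b) \<Rightarrow> 'e cls \<Rightarrow> ('c \<Rightarrow> 'b) \<Rightarrow> 'c cls \<Rightarrow> ('e \<times> 'c) set" where
  "pb_carrier p E q C = {(e, c). e \<in> carrier E \<and> c \<in> carrier C \<and> p e = q c}"

definition pb :: "('e \<Rightarrow> 'b) \<Rightarrow> 'e cls \<Rightarrow> ('c \<Rightarrow> 'b) \<Rightarrow> 'c cls \<Rightarrow> ('e \<times> 'c) cls" where
  "pb p E q C = (let P = pb_carrier p E q C in
     (P, {P \<inter> \<Inter>S | S. S \<subseteq> {{x\<in>P. fst x \<in> Y} | Y. Y \<in> closed E}
                          \<union> {{x\<in>P. snd x \<in> Z} | Z. Z \<in> closed C}}))"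

definition descent_data ::
  "('e \<Rightarrow> 'b) \<Rightarrow> 'e cls \<Rightarrow> 'c cls \<Rightarrow> ('c \<Rightarrow> 'e) \<Rightarrow> ('e \<times> 'c \<Rightarrow> 'c) \<Rightarrow> bool" where
  "descent_data p E C \<gamma> \<xi> \<longleftrightarrow>
     closure_space C \<and> cls_mor C E \<gamma> \<and> cls_mor (pb p E (p \<circ> \<gamma>) C) C \<xi> \<and>
     (\<forall>x\<in>pb_carrier p E (p \<circ> \<gamma>) C. \<gamma> (\<xi> x) = fst x) \<and>
     (\<forall>c\<in>carrier C. \<xi> (\<gamma> c, c) = c) \<and>
     (\<forall>e e' c. (e, (e', c)) \<in> pb_carrier p E (\<lambda>y. p (fst y)) (pb p E (p \<circ> \<gamma>) C) \<longrightarrow>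
         \<xi> (e, \<xi> (e', c)) = \<xi> (e, c))"

definition descent_mor ::
  "('e \<Rightarrow> 'b) \<Rightarrow> 'e cls \<Rightarrow> 'c cls \<Rightarrow> ('c \<Rightarrow> 'e) \<Rightarrow> ('e \<times> 'c \<Rightarrow> 'c)
     \<Rightarrow> 'd cls \<Rightarrow> ('d \<Rightarrow> 'e) \<Rightarrow> ('e \<times> 'd \<Rightarrow> 'd) \<Rightarrow> ('c \<Rightarrow> 'd) \<Rightarrow> bool" where
  "descent_mor p E C \<gamma> \<xi> C' \<gamma>' \<xi>' f \<longleftrightarrow>
     cls_mor C C' f \<and> (\<forall>c\<in>carrier C. \<gamma>' (f c) = \<gamma> c) \<and>
     (\<forall>e c. (e, c) \<in> pb_carrier p E (p \<circ> \<gamma>) C \<longrightarrow> f (\<xi> (e, c)) = \<xi>' (e, f c))"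

definition slice_obj :: "'b cls \<Rightarrow> 'a cls \<Rightarrow> ('a \<Rightarrow> 'b) \<Rightarrow> bool" where
  "slice_obj B A \<alpha> \<longleftrightarrow> closure_space A \<and> cls_mor A B \<alpha>"

definition slice_mor :: "'a cls \<Rightarrow> ('a \<Rightarrow> 'b) \<Rightarrow> 'a' cls \<Rightarrow> ('a' \<Rightarrow> 'b) \<Rightarrow> ('a \<Rightarrow> 'a') \<Rightarrow> bool" where
  "slice_mor A \<alpha> A' \<alpha>' g \<longleftrightarrow> cls_mor A A' g \<and> (\<forall>a\<in>carrier A. \<alpha>' (g a) = \<alpha> a)"

text \<open>The comparison functor K^p.
  On objects: K^p(A,\<alpha>) = (E \<times>_B A, \<pi>1, E \<times>_B \<pi>2); on morphisms: g \<mapsto> E \<times>_B g.\<close>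
definition K_cls :: "('e \<Rightarrow> 'b) \<Rightarrow> 'e cls \<Rightarrow> 'a cls \<Rightarrow> ('a \<Rightarrow> 'b) \<Rightarrow> ('e \<times> 'a) cls" where
  "K_cls p E A \<alpha> = pb p E \<alpha> A"

definition K_gamma :: "'e \<times> 'a \<Rightarrow> 'e" where
  "K_gamma = fst"

definition K_xi :: "'e \<times> ('e \<times> 'a) \<Rightarrow> 'e \<times> 'a" where
  "K_xi x = (fst x, snd (snd x))"

definition K_mor :: "('a \<Rightarrow> 'a') \<Rightarrow> 'e \<times> 'a \<Rightarrow> 'e \<times> 'a'" where
  "K_mor g x = (fst x, g (snd x))"

definition K_full_faithful_at ::
  "('e \<Rightarrow> 'b) \<Rightarrow> 'e cls \<Rightarrow> 'b cls \<Rightarrow> 'a cls \<Rightarrow> ('a \<Rightarrow> 'b) \<Rightarrow> 'a' cls \<Rightarrow> ('a' \<Rightarrow> 'b) \<Rightarrow> bool" where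
  "K_full_faithful_at p E B A \<alpha> A' \<alpha>' \<longleftrightarrow>
     (\<forall>g1 g2. slice_mor A \<alpha> A' \<alpha>' g1 \<longrightarrow> slice_mor A \<alpha> A' \<alpha>' g2 \<longrightarrow>
        (\<forall>x\<in>carrier (K_cls p E A \<alpha>). K_mor g1 x = K_mor g2 x) \<longrightarrow>
        (\<forall>a\<in>carrier A. g1 a = g2 a)) \<and>
     (\<forall>f. descent_mor p E (K_cls p E A \<alpha>) K_gamma K_xi (K_cls p E A' \<alpha>') K_gamma K_xi f \<longrightarrow>
        (\<exists>g. slice_mor A \<alpha> A' \<alpha>' g \<and> (\<forall>x\<in>carrier (K_cls p E A \<alpha>). K_mor g x = f x)))"

text \<open>The descent data (C,\<gamma>,\<xi>) is isomorphic in Des(p) to K^p(A,\<alpha>) for some object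
  (A,\<alpha>) of CLS \<down> B (with A taken on the same carrier type as C).\<close>
definition K_ess_surj_at ::
  "('e \<Rightarrow> 'b) \<Rightarrow> 'e cls \<Rightarrow> 'b cls \<Rightarrow> 'c cls \<Rightarrow> ('c \<Rightarrow> 'e) \<Rightarrow> ('e \<times> 'c \<Rightarrow> 'c) \<Rightarrow> bool" where
  "K_ess_surj_at p E B C \<gamma> \<xi> \<longleftrightarrow>
     (\<exists>(A :: 'c cls) \<alpha> f h. slice_obj B A \<alpha> \<and>
        descent_mor p E (K_cls p E A \<alpha>) K_gamma K_xi C \<gamma> \<xi> f \<and>
        descent_mor p E C \<gamma> \<xi> (K_cls p E A \<alpha>) K_gamma K_xi h \<and>
        (\<forall>x\<in>carrier (K_cls p E A \<alpha>). h (f x) = x) \<and>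
        (\<forall>c\<in>carrier C. f (h c) = c))"

end

theory Submission
  imports Defs
begin


lemma pb_carrier_eq[simp]: "carrier (pb p E q C) = pb_carrier p E q C"
  by (simp add: pb_def Let_def)

lemma pb_closed_eq: "closed (pb p E q C) = {pb_carrier p E q C \<inter> \<Inter>S | S. S \<subseteq> {{x\<in>pb_carrier p E q C. fst x \<in> Y} | Y. Y \<in> closed E}
                          \<union> {{x\<in>pb_carrier p E q C. snd x \<in> Z} | Z. Z \<in> closed C}}"
  by (simp add: pb_def Let_def)

lemma mem_pb_carrier[simp]: "(x,y) \<in> pb_carrier p E q C \<longleftrightarrow> x\<in>carrier E \<and> y\<in>carrier C \<and> p x = q y"
  by (simp add: pb_carrier_def)

lemma cs_carrier: "closure_space X \<Longrightarrow> carrier X \<in> closed X"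
proof -
  assume "closure_space X"
  hence "carrier X \<inter> \<Inter>{} \<in> closed X" unfolding closure_space_def by blast
  thus ?thesis by simp
qed

lemma cs_sub: "closure_space X \<Longrightarrow> Z \<in> closed X \<Longrightarrow> Z \<subseteq> carrier X"
  unfolding closure_space_def by blast

lemma cs_Inter: "closure_space X \<Longrightarrow> S \<subseteq> closed X \<Longrightarrow> carrier X \<inter> \<Inter>S \<in> closed X"
  unfolding closure_space_def by (elim conjE allE impE)

lemma cs_int: assumes "closure_space X" "Z1 \<in> closed X" "Z2 \<in> closed X"
  shows "Z1 \<inter> Z2 \<in> closed X"
proof -
  have "\<forall>S. S \<subseteq> closed X \<longrightarrow> carrier X \<inter> \<Inter>S \<in> closed X" using assms(1) unfolding closure_space_def by (rule conjunct2)
  hence "{Z1,Z2} \<subseteq> closed X \<longrightarrow> carrier X \<inter> \<Inter>{Z1,Z2} \<in> closed X" by (rule spec)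
  hence "carrier X \<inter> \<Inter>{Z1,Z2} \<in> closed X" using assms(2,3) by simp
  moreover have "carrier X \<inter> \<Inter>{Z1,Z2} = Z1 \<inter> Z2" using cs_sub[OF assms(1,2)] by auto
  ultimately show ?thesis by simp
qed

lemma cls_morD1: "cls_mor X Y f \<Longrightarrow> x \<in> carrier X \<Longrightarrow> f x \<in> carrier Y"
  unfolding cls_mor_def by blast

lemma cls_morD2: "cls_mor X Y f \<Longrightarrow> Z \<in> closed Y \<Longrightarrow> {x\<in>carrier X. f x \<in> Z} \<in> closed X"
  unfolding cls_mor_def by blast

lemma cls_morI: "(\<And>x. x \<in> carrier X \<Longrightarrow> f x \<in> carrier Y) \<Longrightarrow>
   (\<And>Z. Z \<in> closed Y \<Longrightarrow> {x\<in>carrier X. f x \<in> Z} \<in> closed X) \<Longrightarrow> cls_mor X Y f"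
  unfolding cls_mor_def by blast

lemma cls_mor_comp: "cls_mor X Y f \<Longrightarrow> cls_mor Y Z g \<Longrightarrow> cls_mor X Z (g \<circ> f)"
proof -
  assume f: "cls_mor X Y f" and g: "cls_mor Y Z g"
  show ?thesis
  proof (rule cls_morI)
    fix x assume "x \<in> carrier X" thus "(g \<circ> f) x \<in> carrier Z" using f g by (simp add: cls_morD1)
  next
    fix W assume W: "W \<in> closed Z"
    have "{y\<in>carrier Y. g y \<in> W} \<in> closed Y" using g W by (rule cls_morD2)
    hence "{x\<in>carrier X. f x \<in> {y\<in>carrier Y. g y \<in> W}} \<in> closed X" by (rule cls_morD2[OF f])
    moreover have "{x\<in>carrier X. f x \<in> {y\<in>carrier Y. g y \<in> W}} = {x\<in>carrier X. (g \<circ> f) x \<in> W}"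
      using cls_morD1[OF f] by auto
    ultimately show "{x\<in>carrier X. (g \<circ> f) x \<in> W} \<in> closed X" by simp
  qed
qed

lemma pb_closedI:
  assumes "Y \<in> closed E" "W \<in> closed C"
  shows "{x\<in>pb_carrier p E q C. fst x \<in> Y \<and> snd x \<in> W} \<in> closed (pb p E q C)"
proof -
  let ?P = "pb_carrier p E q C"
  let ?S = "{{x\<in>?P. fst x\<in>Y}, {x\<in>?P. snd x\<in>W}}"
  have 1: "{x\<in>?P. fst x\<in>Y} \<in> {{x\<in>?P. fst x \<in> Y} | Y. Y \<in> closed E}"
    unfolding mem_Collect_eq using assms(1) by (intro exI[of _ Y]) simp
  have 2: "{x\<in>?P. snd x\<in>W} \<in> {{x\<in>?P. snd x \<in> Z} | Z. Z \<in> closed C}"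
    unfolding mem_Collect_eq using assms(2) by (intro exI[of _ W]) simp
  have S: "?S \<subseteq> {{x\<in>?P. fst x \<in> Y} | Y. Y \<in> closed E} \<union> {{x\<in>?P. snd x \<in> Z} | Z. Z \<in> closed C}"
    using 1 2 by (simp only: insert_subset Un_iff empty_subsetI simp_thms)
  have E: "{x\<in>?P. fst x \<in> Y \<and> snd x \<in> W} = ?P \<inter> \<Inter>?S" by auto
  show ?thesis unfolding pb_closed_eq mem_Collect_eq
    using E S by (intro exI[of _ ?S] conjI)
qed

lemma pb_closedD:
  assumes "closure_space E" "closure_space C" "T \<in> closed (pb p E q C)"
  shows "\<exists>Y\<in>closed E. \<exists>W\<in>closed C. T = {x\<in>pb_carrier p E q C. fst x \<in> Y \<and> snd x \<in> W}"
proof -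
  let ?P = "pb_carrier p E q C"
  have "\<exists>S. T = ?P \<inter> \<Inter>S \<and> S \<subseteq> {{x\<in>?P. fst x \<in> Y} | Y. Y \<in> closed E} \<union> {{x\<in>?P. snd x \<in> Z} | Z. Z \<in> closed C}"
    using assms(3) unfolding pb_closed_eq by (simp only: mem_Collect_eq)
  then obtain S where S: "S \<subseteq> {{x\<in>?P. fst x \<in> Y} | Y. Y \<in> closed E} \<union> {{x\<in>?P. snd x \<in> Z} | Z. Z \<in> closed C}"
    and T: "T = ?P \<inter> \<Inter>S" by (elim exE conjE)
  define YY where "YY = {Y\<in>closed E. {x\<in>?P. fst x\<in>Y} \<in> S}"
  define WW where "WW = {Z\<in>closed C. {x\<in>?P. snd x\<in>Z} \<in> S}"
  define Y where "Y = carrier E \<inter> \<Inter>YY"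
  define W where "W = carrier C \<inter> \<Inter>WW"
  have Y: "Y \<in> closed E" unfolding Y_def by (rule cs_Inter[OF assms(1)]) (auto simp: YY_def)
  have W: "W \<in> closed C" unfolding W_def by (rule cs_Inter[OF assms(2)]) (auto simp: WW_def)
  have "T = {x\<in>?P. fst x\<in>Y \<and> snd x\<in>W}"
  proof (rule set_eqI, rule iffI)
    fix x assume "x \<in> T"
    hence xP: "x\<in>?P" and xS: "\<forall>s\<in>S. x\<in>s" using T by auto
    have c: "fst x \<in> carrier E" "snd x \<in> carrier C" using xP by (auto simp: pb_carrier_def)
    have y: "fst x \<in> \<Inter>YY"
    proof (rule InterI)
      fix Y' assume "Y' \<in> YY"
      hence "{x\<in>?P. fst x\<in>Y'} \<in> S" by (simp add: YY_def)
      hence "x \<in> {x\<in>?P. fst x\<in>Y'}" by (rule bspec[OF xS])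
      thus "fst x \<in> Y'" by simp
    qed
    have w: "snd x \<in> \<Inter>WW"
    proof (rule InterI)
      fix Y' assume "Y' \<in> WW"
      hence "{x\<in>?P. snd x\<in>Y'} \<in> S" by (simp add: WW_def)
      hence "x \<in> {x\<in>?P. snd x\<in>Y'}" by (rule bspec[OF xS])
      thus "snd x \<in> Y'" by simp
    qed
    show "x \<in> {x\<in>?P. fst x\<in>Y \<and> snd x\<in>W}" using xP c y w unfolding Y_def W_def by simp
  next
    fix x assume x: "x \<in> {x\<in>?P. fst x\<in>Y \<and> snd x\<in>W}"
    have "\<forall>s\<in>S. x\<in>s"
    proof
      fix s assume sS: "s\<in>S"
      have "s \<in> {{x\<in>?P. fst x \<in> Y} | Y. Y \<in> closed E} \<union> {{x\<in>?P. snd x \<in> Z} | Z. Z \<in> closed C}"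
        using S sS by (rule subsetD)
      then show "x\<in>s"
      proof (elim UnE)
        assume "s \<in> {{x\<in>?P. fst x \<in> Y} | Y. Y \<in> closed E}"
        then obtain Y' where a: "Y'\<in>closed E" "s = {x\<in>?P. fst x\<in>Y'}" unfolding mem_Collect_eq by (elim exE conjE) simp
        then have "Y'\<in>YY" using sS unfolding YY_def by simp
        then show ?thesis using x a unfolding Y_def by auto
      next
        assume "s \<in> {{x\<in>?P. snd x \<in> Z} | Z. Z \<in> closed C}"
        then obtain Z' where b: "Z'\<in>closed C" "s = {x\<in>?P. snd x\<in>Z'}" unfolding mem_Collect_eq by (elim exE conjE) simp
        then have "Z'\<in>WW" using sS unfolding WW_def by simp
        then show ?thesis using x b unfolding W_def by auto
      qed
    qed
    then show "x\<in>T" using T x by auto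
  qed
  thus ?thesis using Y W by (intro bexI)
qed

lemma cls_mor_into_pb:
  assumes "closure_space X" "closure_space E" "closure_space C"
    "cls_mor X E u" "cls_mor X C v" "\<forall>x\<in>carrier X. p (u x) = q (v x)"
  shows "cls_mor X (pb p E q C) (\<lambda>x. (u x, v x))"
proof (rule cls_morI)
  fix x assume x: "x \<in> carrier X"
  have "u x \<in> carrier E" "v x \<in> carrier C" "p (u x) = q (v x)"
    using cls_morD1[OF assms(4) x] cls_morD1[OF assms(5) x] assms(6) x by auto
  thus "(u x, v x) \<in> carrier (pb p E q C)" by simp
next
  fix T assume "T \<in> closed (pb p E q C)"
  from pb_closedD[OF assms(2,3) this] obtain Y where Y: "Y\<in>closed E"
    and "\<exists>W\<in>closed C. T = {x\<in>pb_carrier p E q C. fst x \<in> Y \<and> snd x \<in> W}" by (elim bexE) (rule that, assumption, rule bexI)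
  then obtain W where W: "W\<in>closed C"
    and T: "T = {x\<in>pb_carrier p E q C. fst x \<in> Y \<and> snd x \<in> W}" by (elim bexE)
  have "{x\<in>carrier X. u x \<in> Y} \<inter> {x\<in>carrier X. v x \<in> W} \<in> closed X"
    using cs_int[OF assms(1) cls_morD2[OF assms(4) Y] cls_morD2[OF assms(5) W]] .
  moreover have "{x\<in>carrier X. u x \<in> Y} \<inter> {x\<in>carrier X. v x \<in> W} = {x\<in>carrier X. (u x, v x) \<in> T}"
    using cls_morD1[OF assms(4)] cls_morD1[OF assms(5)] assms(6) unfolding T by auto
  ultimately show "{x\<in>carrier X. (u x, v x) \<in> T} \<in> closed X" by simp
qed

lemma descend_closed:
  assumes "closure_space A" "closure_space E" "cls_mor A B \<alpha>" "closed_mor E B p" "Y\<in>closed E" "W\<in>closed A"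
  shows "{a\<in>carrier A. a\<in>W \<and> (\<exists>e\<in>carrier E. p e = \<alpha> a \<and> e\<in>Y)} \<in> closed A"
proof -
  have "p ` Y \<in> closed B" using assms(4,5) unfolding closed_mor_def by auto
  hence "{a\<in>carrier A. \<alpha> a \<in> p ` Y} \<in> closed A" using assms(3) unfolding cls_mor_def by auto
  hence "W \<inter> {a\<in>carrier A. \<alpha> a \<in> p ` Y} \<in> closed A" using cs_int[OF assms(1) assms(6)] by blast
  moreover have "W \<inter> {a\<in>carrier A. \<alpha> a \<in> p ` Y} = {a\<in>carrier A. a\<in>W \<and> (\<exists>e\<in>carrier E. p e = \<alpha> a \<and> e\<in>Y)}"
  proof (rule set_eqI, rule iffI)
    fix a assume "a \<in> W \<inter> {a\<in>carrier A. \<alpha> a \<in> p ` Y}"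
    then obtain e where "e \<in> Y" "\<alpha> a = p e" "a \<in> W" "a \<in> carrier A" by auto
    then show "a \<in> {a\<in>carrier A. a\<in>W \<and> (\<exists>e\<in>carrier E. p e = \<alpha> a \<and> e\<in>Y)}"
      using cs_sub[OF assms(2,5)] by auto
  next
    fix a assume "a \<in> {a\<in>carrier A. a\<in>W \<and> (\<exists>e\<in>carrier E. p e = \<alpha> a \<and> e\<in>Y)}"
    then obtain e where "e \<in> Y" "\<alpha> a = p e" "a \<in> W" "a \<in> carrier A" by auto
    then show "a \<in> W \<inter> {a\<in>carrier A. \<alpha> a \<in> p ` Y}" by auto
  qed
  ultimately show ?thesis by simp
qed

lemma descend_open:
  assumes "closure_space A" "closure_space E" "cls_mor A B \<alpha>" "open_mor E B p" "Y\<in>closed E" "W\<in>closed A"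
  shows "{a\<in>carrier A. a\<in>W \<and> (\<forall>e\<in>carrier E. p e = \<alpha> a \<longrightarrow> e\<in>Y)} \<in> closed A"
proof -
  have Ysub: "Y \<subseteq> carrier E" using cs_sub[OF assms(2,5)] .
  have "carrier E - (carrier E - Y) = Y" using Ysub by auto
  hence "carrier B - p ` (carrier E - Y) \<in> closed B" using assms(4,5) unfolding open_mor_def
    by (metis Diff_subset)
  hence "{a\<in>carrier A. \<alpha> a \<in> carrier B - p ` (carrier E - Y)} \<in> closed A" using assms(3) unfolding cls_mor_def by auto
  hence "W \<inter> {a\<in>carrier A. \<alpha> a \<in> carrier B - p ` (carrier E - Y)} \<in> closed A" using cs_int[OF assms(1) assms(6)] by blast
  moreover have "W \<inter> {a\<in>carrier A. \<alpha> a \<in> carrier B - p ` (carrier E - Y)} = {a\<in>carrier A. a\<in>W \<and> (\<forall>e\<in>carrier E. p e = \<alpha> a \<longrightarrow> e\<in>Y)}"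
  proof (rule set_eqI, rule iffI)
    fix a assume a: "a \<in> W \<inter> {a\<in>carrier A. \<alpha> a \<in> carrier B - p ` (carrier E - Y)}"
    have "\<forall>e\<in>carrier E. p e = \<alpha> a \<longrightarrow> e\<in>Y"
    proof (intro ballI impI)
      fix e assume "e \<in> carrier E" "p e = \<alpha> a"
      show "e \<in> Y"
      proof (rule ccontr)
        assume "e \<notin> Y"
        hence "p e \<in> p ` (carrier E - Y)" using \<open>e \<in> carrier E\<close> by blast
        thus False using a \<open>p e = \<alpha> a\<close> by auto
      qed
    qed
    then show "a \<in> {a\<in>carrier A. a\<in>W \<and> (\<forall>e\<in>carrier E. p e = \<alpha> a \<longrightarrow> e\<in>Y)}" using a by auto
  next
    fix a assume a: "a \<in> {a\<in>carrier A. a\<in>W \<and> (\<forall>e\<in>carrier E. p e = \<alpha> a \<longrightarrow> e\<in>Y)}"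
    have "\<alpha> a \<in> carrier B" using a assms(3) unfolding cls_mor_def by auto
    moreover have "\<alpha> a \<notin> p ` (carrier E - Y)" using a by auto
    ultimately show "a \<in> W \<inter> {a\<in>carrier A. \<alpha> a \<in> carrier B - p ` (carrier E - Y)}" using a by auto
  qed
  ultimately show ?thesis by simp
qed



lemma full_faithful:
  assumes E_cs: "closure_space E" and pm: "cls_mor E B p" and surj: "p ` carrier E = carrier B"
    and co: "closed_mor E B p \<or> open_mor E B p"
    and sA: "slice_obj B A \<alpha>" and sA': "slice_obj B A' \<alpha>'"
  shows "K_full_faithful_at p E B A \<alpha> A' \<alpha>'"
proof -
  have A_cs: "closure_space A" and \<alpha>m: "cls_mor A B \<alpha>" using sA unfolding slice_obj_def by simp_all
  have A'_cs: "closure_space A'" and \<alpha>'m: "cls_mor A' B \<alpha>'" using sA' unfolding slice_obj_def by simp_all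
  define sel where "sel a = (SOME e. e \<in> carrier E \<and> p e = \<alpha> a)" for a
  have sel: "sel a \<in> carrier E \<and> p (sel a) = \<alpha> a" if a: "a \<in> carrier A" for a
  proof -
    have "\<alpha> a \<in> p ` carrier E" using surj cls_morD1[OF \<alpha>m a] by simp
    then obtain e where "e \<in> carrier E" "\<alpha> a = p e" by (rule imageE)
    hence "\<exists>e. e \<in> carrier E \<and> p e = \<alpha> a" by auto
    thus ?thesis unfolding sel_def by (rule someI_ex)
  qed
  show ?thesis unfolding K_full_faithful_at_def
  proof (intro conjI allI impI ballI)
    fix g1 g2 a assume eq: "\<forall>x\<in>carrier (K_cls p E A \<alpha>). K_mor g1 x = K_mor g2 x" and a: "a \<in> carrier A"
    have "(sel a, a) \<in> carrier (K_cls p E A \<alpha>)" using sel[OF a] a by (simp add: K_cls_def)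
    hence "K_mor g1 (sel a,a) = K_mor g2 (sel a, a)" by (rule bspec[OF eq])
    thus "g1 a = g2 a" by (simp add: K_mor_def)
  next
    fix f assume dm: "descent_mor p E (K_cls p E A \<alpha>) K_gamma K_xi (K_cls p E A' \<alpha>') K_gamma K_xi f"
    have fm: "cls_mor (pb p E \<alpha> A) (pb p E \<alpha>' A') f" using dm unfolding descent_mor_def K_cls_def by simp
    have fx: "\<forall>e c. (e, c) \<in> pb_carrier p E (p \<circ> K_gamma) (K_cls p E A \<alpha>) \<longrightarrow> f (K_xi (e, c)) = K_xi (e, f c)"
      using dm unfolding descent_mor_def by (elim conjE)
    define g where "g a = snd (f (sel a, a))" for a
    have key: "f (e, a) = (e, g a)" if "e \<in> carrier E" "a \<in> carrier A" "p e = \<alpha> a" for e a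
    proof -
      have "(e, (sel a, a)) \<in> pb_carrier p E (p \<circ> K_gamma) (K_cls p E A \<alpha>)"
        using that sel[OF that(2)] by (simp add: K_cls_def K_gamma_def)
      hence "f (K_xi (e, (sel a, a))) = K_xi (e, f (sel a, a))" using fx by blast
      thus ?thesis by (simp add: K_xi_def g_def)
    qed
    have fcar: "f x \<in> pb_carrier p E \<alpha>' A'" if "x \<in> pb_carrier p E \<alpha> A" for x
      using cls_morD1[OF fm] that by simp
    have gp: "g a \<in> carrier A' \<and> \<alpha>' (g a) = \<alpha> a" if a: "a \<in> carrier A" for a
    proof -
      have "(sel a, a) \<in> pb_carrier p E \<alpha> A" using sel[OF a] a by simp
      hence "f (sel a, a) \<in> pb_carrier p E \<alpha>' A'" by (rule fcar)
      hence "(sel a, g a) \<in> pb_carrier p E \<alpha>' A'" using key sel[OF a] a by simp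
      thus ?thesis using sel[OF a] by simp
    qed
    have gm: "cls_mor A A' g"
    proof (rule cls_morI)
      fix a assume "a \<in> carrier A" thus "g a \<in> carrier A'" using gp by blast
    next
      fix Z assume Z: "Z \<in> closed A'"
      define T where "T = {x\<in>pb_carrier p E \<alpha>' A'. fst x \<in> carrier E \<and> snd x \<in> Z}"
      have "T \<in> closed (pb p E \<alpha>' A')" unfolding T_def by (rule pb_closedI[OF cs_carrier[OF E_cs] Z])
      hence "{x\<in>carrier (pb p E \<alpha> A). f x \<in> T} \<in> closed (pb p E \<alpha> A)" by (rule cls_morD2[OF fm])
      hence "{x\<in>pb_carrier p E \<alpha> A. f x \<in> T} \<in> closed (pb p E \<alpha> A)" by simp
      from pb_closedD[OF E_cs A_cs this] obtain Y where Y: "Y\<in>closed E"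
        and "\<exists>W\<in>closed A. {x\<in>pb_carrier p E \<alpha> A. f x \<in> T} = {x\<in>pb_carrier p E \<alpha> A. fst x \<in> Y \<and> snd x \<in> W}"
        by (elim bexE) (rule that, assumption, rule bexI)
      then obtain W where W: "W\<in>closed A"
        and TE: "{x\<in>pb_carrier p E \<alpha> A. f x \<in> T} = {x\<in>pb_carrier p E \<alpha> A. fst x \<in> Y \<and> snd x \<in> W}"
        by (elim bexE)
      have char: "(g a \<in> Z) \<longleftrightarrow> e \<in> Y \<and> a \<in> W" if "e \<in> carrier E" "a \<in> carrier A" "p e = \<alpha> a" for e a
      proof -
        have fe: "f (e, a) = (e, g a)" using key that by blast
        have P: "(e, a) \<in> pb_carrier p E \<alpha> A" using that by simp
        have P': "(e, g a) \<in> pb_carrier p E \<alpha>' A'" using fcar[OF P] fe by simp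
        have "(g a \<in> Z) \<longleftrightarrow> (e,a) \<in> {x\<in>pb_carrier p E \<alpha> A. f x \<in> T}"
          using P P' fe by (simp add: T_def)
        also have "\<dots> \<longleftrightarrow> e \<in> Y \<and> a \<in> W" using P by (simp only: TE) simp
        finally show ?thesis .
      qed
      from co show "{a\<in>carrier A. g a \<in> Z} \<in> closed A"
      proof
        assume cm: "closed_mor E B p"
        have "{a\<in>carrier A. a\<in>W \<and> (\<exists>e\<in>carrier E. p e = \<alpha> a \<and> e\<in>Y)} \<in> closed A"
          by (rule descend_closed[OF A_cs E_cs \<alpha>m cm Y W])
        moreover have "{a\<in>carrier A. a\<in>W \<and> (\<exists>e\<in>carrier E. p e = \<alpha> a \<and> e\<in>Y)} = {a\<in>carrier A. g a \<in> Z}"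
        proof (rule set_eqI)
          fix a show "a \<in> {a\<in>carrier A. a\<in>W \<and> (\<exists>e\<in>carrier E. p e = \<alpha> a \<and> e\<in>Y)} \<longleftrightarrow> a \<in> {a\<in>carrier A. g a \<in> Z}"
          proof (cases "a \<in> carrier A")
            case True
            show ?thesis
            proof
              assume "a \<in> {a\<in>carrier A. a\<in>W \<and> (\<exists>e\<in>carrier E. p e = \<alpha> a \<and> e\<in>Y)}"
              then obtain e where "e \<in> carrier E" "p e = \<alpha> a" "e \<in> Y" "a \<in> W" by auto
              thus "a \<in> {a\<in>carrier A. g a \<in> Z}" using char[of e a] True by simp
            next
              assume "a \<in> {a\<in>carrier A. g a \<in> Z}"
              thus "a \<in> {a\<in>carrier A. a\<in>W \<and> (\<exists>e\<in>carrier E. p e = \<alpha> a \<and> e\<in>Y)}"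
                using char[of "sel a" a] sel[OF True] True by auto
            qed
          qed simp
        qed
        ultimately show ?thesis by simp
      next
        assume om: "open_mor E B p"
        have "{a\<in>carrier A. a\<in>W \<and> (\<forall>e\<in>carrier E. p e = \<alpha> a \<longrightarrow> e\<in>Y)} \<in> closed A"
          by (rule descend_open[OF A_cs E_cs \<alpha>m om Y W])
        moreover have "{a\<in>carrier A. a\<in>W \<and> (\<forall>e\<in>carrier E. p e = \<alpha> a \<longrightarrow> e\<in>Y)} = {a\<in>carrier A. g a \<in> Z}"
        proof (rule set_eqI)
          fix a show "a \<in> {a\<in>carrier A. a\<in>W \<and> (\<forall>e\<in>carrier E. p e = \<alpha> a \<longrightarrow> e\<in>Y)} \<longleftrightarrow> a \<in> {a\<in>carrier A. g a \<in> Z}"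
          proof (cases "a \<in> carrier A")
            case True
            show ?thesis
            proof
              assume "a \<in> {a\<in>carrier A. a\<in>W \<and> (\<forall>e\<in>carrier E. p e = \<alpha> a \<longrightarrow> e\<in>Y)}"
              thus "a \<in> {a\<in>carrier A. g a \<in> Z}" using char[of "sel a" a] sel[OF True] True by auto
            next
              assume gz: "a \<in> {a\<in>carrier A. g a \<in> Z}"
              have "\<forall>e\<in>carrier E. p e = \<alpha> a \<longrightarrow> e\<in>Y" using char gz True by auto
              moreover have "a \<in> W" using char[of "sel a" a] sel[OF True] True gz by auto
              ultimately show "a \<in> {a\<in>carrier A. a\<in>W \<and> (\<forall>e\<in>carrier E. p e = \<alpha> a \<longrightarrow> e\<in>Y)}"
                using True by simp
            qed
          qed simp
        qed
        ultimately show ?thesis by simp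
      qed
    qed
    have sm: "slice_mor A \<alpha> A' \<alpha>' g" unfolding slice_mor_def using gm gp by blast
    have "\<forall>x\<in>carrier (K_cls p E A \<alpha>). K_mor g x = f x"
    proof
      fix x assume x: "x \<in> carrier (K_cls p E A \<alpha>)"
      obtain e a where xe: "x = (e, a)" by (cases x)
      have "e \<in> carrier E" "a \<in> carrier A" "p e = \<alpha> a" using x xe by (simp_all add: K_cls_def)
      thus "K_mor g x = f x" using key xe by (simp add: K_mor_def)
    qed
    thus "\<exists>g. slice_mor A \<alpha> A' \<alpha>' g \<and> (\<forall>x\<in>carrier (K_cls p E A \<alpha>). K_mor g x = f x)"
      using sm by blast
  qed
qed



lemma ess_surj:
  assumes E_cs: "closure_space E" and pm: "cls_mor E B p" and surj: "p ` carrier E = carrier B"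
    and co: "closed_mor E B p \<or> open_mor E B p"
    and dd: "descent_data p E C \<gamma> \<xi>"
  shows "K_ess_surj_at p E B C \<gamma> \<xi>"
proof -
  note D = dd[unfolded descent_data_def]
  have C_cs: "closure_space C" using D by (elim conjE) assumption
  have \<gamma>m: "cls_mor C E \<gamma>" using D by (elim conjE) assumption
  have \<xi>m: "cls_mor (pb p E (p \<circ> \<gamma>) C) C \<xi>" using D by (elim conjE) assumption
  have \<gamma>\<xi>: "\<forall>x\<in>pb_carrier p E (p \<circ> \<gamma>) C. \<gamma> (\<xi> x) = fst x" using D by (elim conjE) assumption
  have unit: "\<forall>c\<in>carrier C. \<xi> (\<gamma> c, c) = c" using D by (elim conjE) assumption
  have coc: "\<forall>e e' c. (e, (e', c)) \<in> pb_carrier p E (\<lambda>y. p (fst y)) (pb p E (p \<circ> \<gamma>) C) \<longrightarrow>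
         \<xi> (e, \<xi> (e', c)) = \<xi> (e, c)" using D by (elim conjE) assumption
  have pgm: "cls_mor C B (p \<circ> \<gamma>)" by (rule cls_mor_comp[OF \<gamma>m pm])
  have \<gamma>C: "\<gamma> c \<in> carrier E" if "c \<in> carrier C" for c using cls_morD1[OF \<gamma>m that] .
  have pgB: "p (\<gamma> c) \<in> carrier B" if "c \<in> carrier C" for c using cls_morD1[OF pgm that] by simp
  have \<xi>C: "\<xi> (e, c) \<in> carrier C" if "e \<in> carrier E" "c \<in> carrier C" "p e = p (\<gamma> c)" for e c
    using cls_morD1[OF \<xi>m] that by simp
  have \<gamma>\<xi>': "\<gamma> (\<xi> (e, c)) = e" if "e \<in> carrier E" "c \<in> carrier C" "p e = p (\<gamma> c)" for e c
    using \<gamma>\<xi> that by simp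
  have coc': "\<xi> (e, \<xi> (e', c)) = \<xi> (e, c)"
    if "e \<in> carrier E" "e' \<in> carrier E" "c \<in> carrier C" "p e' = p (\<gamma> c)" "p e = p e'" for e e' c
  proof -
    have "(e, (e', c)) \<in> pb_carrier p E (\<lambda>y. p (fst y)) (pb p E (p \<circ> \<gamma>) C)" using that by simp
    thus ?thesis using coc by blast
  qed
  define s where "s b = (SOME e. e \<in> carrier E \<and> p e = b)" for b
  have s: "s b \<in> carrier E \<and> p (s b) = b" if b: "b \<in> carrier B" for b
  proof -
    have "b \<in> p ` carrier E" using surj b by simp
    then obtain e where "e \<in> carrier E" "b = p e" by (rule imageE)
    hence "\<exists>e. e \<in> carrier E \<and> p e = b" by auto
    thus ?thesis unfolding s_def by (rule someI_ex)
  qed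
  define q where "q c = \<xi> (s (p (\<gamma> c)), c)" for c
  define Acar where "Acar = {c\<in>carrier C. \<gamma> c = s (p (\<gamma> c))}"
  define Acl where "Acl = {W. W \<subseteq> Acar \<and> {c\<in>carrier C. q c \<in> W} \<in> closed C}"
  define A :: "'c cls" where "A = (Acar, Acl)"
  define \<alpha> where "\<alpha> = p \<circ> \<gamma>"
  have sc: "s (p (\<gamma> c)) \<in> carrier E" "p (s (p (\<gamma> c))) = p (\<gamma> c)" if "c \<in> carrier C" for c
    using s[OF pgB[OF that]] by auto
  have qC: "q c \<in> carrier C" if c: "c \<in> carrier C" for c unfolding q_def using \<xi>C[OF sc(1)[OF c] c sc(2)[OF c]] .
  have q\<gamma>: "\<gamma> (q c) = s (p (\<gamma> c))" if c: "c \<in> carrier C" for c unfolding q_def using \<gamma>\<xi>'[OF sc(1)[OF c] c sc(2)[OF c]] .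
  have qp\<gamma>: "p (\<gamma> (q c)) = p (\<gamma> c)" if c: "c \<in> carrier C" for c using q\<gamma>[OF c] sc(2)[OF c] by simp
  have qA: "q c \<in> Acar" if c: "c \<in> carrier C" for c
    unfolding Acar_def using qC[OF c] q\<gamma>[OF c] qp\<gamma>[OF c] by simp
  have AC: "a \<in> carrier C" if "a \<in> Acar" for a using that unfolding Acar_def by simp
  have qfix: "q a = a" if a: "a \<in> Acar" for a
  proof -
    have "s (p (\<gamma> a)) = \<gamma> a" using a unfolding Acar_def by simp
    thus ?thesis unfolding q_def using unit AC[OF a] by simp
  qed
  have \<xi>q: "\<xi> (e, q c) = \<xi> (e, c)" if "e \<in> carrier E" "c \<in> carrier C" "p e = p (\<gamma> c)" for e c
    unfolding q_def using coc'[OF that(1) sc(1)[OF that(2)] that(2) sc(2)[OF that(2)]] that(3) sc(2)[OF that(2)] by simp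
  have q\<xi>: "q (\<xi> (e, c)) = q c" if "e \<in> carrier E" "c \<in> carrier C" "p e = p (\<gamma> c)" for e c
  proof -
    have "q (\<xi> (e, c)) = \<xi> (s (p e), \<xi> (e, c))" unfolding q_def using \<gamma>\<xi>'[OF that] by simp
    also have "\<dots> = \<xi> (s (p e), c)"
      using coc'[OF _ that(1) that(2) that(3)] s[OF pgB[OF that(2)]] that(3) by simp
    finally show ?thesis unfolding q_def using that(3) by simp
  qed
  have A_simps: "carrier A = Acar" "closed A = Acl" unfolding A_def by simp_all
  have A_cs: "closure_space A"
    unfolding closure_space_def A_simps
  proof (intro conjI allI impI)
    show "Acl \<subseteq> Pow Acar" unfolding Acl_def by blast
  next
    fix S assume S: "S \<subseteq> Acl"
    have "carrier C \<inter> \<Inter>{{c\<in>carrier C. q c \<in> W} | W. W \<in> S} \<in> closed C"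
      by (rule cs_Inter[OF C_cs]) (use S in \<open>auto simp: Acl_def\<close>)
    moreover have "carrier C \<inter> \<Inter>{{c\<in>carrier C. q c \<in> W} | W. W \<in> S} = {c\<in>carrier C. q c \<in> Acar \<inter> \<Inter>S}"
      using qA by auto
    ultimately show "Acar \<inter> \<Inter>S \<in> Acl" unfolding Acl_def by simp
  qed
  have qm: "cls_mor C A q"
  proof (rule cls_morI)
    fix c assume "c \<in> carrier C" thus "q c \<in> carrier A" using qA A_simps by simp
  next
    fix W assume "W \<in> closed A" thus "{c\<in>carrier C. q c \<in> W} \<in> closed C" unfolding A_simps Acl_def by simp
  qed
  have \<alpha>m: "cls_mor A B \<alpha>"
  proof (rule cls_morI)
    fix a assume "a \<in> carrier A" thus "\<alpha> a \<in> carrier B" unfolding A_simps \<alpha>_def using pgB AC by simp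
  next
    fix V assume V: "V \<in> closed B"
    have "{c\<in>carrier C. (p \<circ> \<gamma>) c \<in> V} \<in> closed C" by (rule cls_morD2[OF pgm V])
    moreover have "{c\<in>carrier C. (p \<circ> \<gamma>) c \<in> V} = {c\<in>carrier C. q c \<in> {a\<in>Acar. \<alpha> a \<in> V}}"
      using qA qp\<gamma> unfolding \<alpha>_def by auto
    ultimately show "{a\<in>carrier A. \<alpha> a \<in> V} \<in> closed A" unfolding A_simps Acl_def by auto
  qed
  have so: "slice_obj B A \<alpha>" unfolding slice_obj_def using A_cs \<alpha>m by simp
  have Kc: "(e, a) \<in> carrier (K_cls p E A \<alpha>) \<longleftrightarrow> e \<in> carrier E \<and> a \<in> Acar \<and> p e = p (\<gamma> a)" for e a
    by (simp add: K_cls_def A_simps \<alpha>_def)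
  define h where "h c = (\<gamma> c, q c)" for c
  have fcm: "cls_mor (K_cls p E A \<alpha>) C \<xi>"
  proof (rule cls_morI)
    fix x assume x: "x \<in> carrier (K_cls p E A \<alpha>)"
    obtain e a where xe: "x = (e, a)" by (cases x)
    show "\<xi> x \<in> carrier C" using x xe Kc \<xi>C AC by auto
  next
    fix Z assume Z: "Z \<in> closed C"
    have "{x\<in>carrier (pb p E (p \<circ> \<gamma>) C). \<xi> x \<in> Z} \<in> closed (pb p E (p \<circ> \<gamma>) C)" by (rule cls_morD2[OF \<xi>m Z])
    hence "{x\<in>pb_carrier p E (p \<circ> \<gamma>) C. \<xi> x \<in> Z} \<in> closed (pb p E (p \<circ> \<gamma>) C)" by simp
    from pb_closedD[OF E_cs C_cs this] obtain Y1 where Y1: "Y1\<in>closed E"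
      and "\<exists>W\<in>closed C. {x\<in>pb_carrier p E (p \<circ> \<gamma>) C. \<xi> x \<in> Z} = {x\<in>pb_carrier p E (p \<circ> \<gamma>) C. fst x \<in> Y1 \<and> snd x \<in> W}"
      by (elim bexE) (rule that, assumption, rule bexI)
    then obtain Z1 where Z1: "Z1\<in>closed C"
      and E1: "{x\<in>pb_carrier p E (p \<circ> \<gamma>) C. \<xi> x \<in> Z} = {x\<in>pb_carrier p E (p \<circ> \<gamma>) C. fst x \<in> Y1 \<and> snd x \<in> Z1}"
      by (elim bexE)
    have char1: "\<xi> (e, c) \<in> Z \<longleftrightarrow> e \<in> Y1 \<and> c \<in> Z1" if "e \<in> carrier E" "c \<in> carrier C" "p e = p (\<gamma> c)" for e c
    proof -
      have P: "(e, c) \<in> pb_carrier p E (p \<circ> \<gamma>) C" using that by simp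
      have "\<xi> (e, c) \<in> Z \<longleftrightarrow> (e, c) \<in> {x\<in>pb_carrier p E (p \<circ> \<gamma>) C. \<xi> x \<in> Z}" using P by simp
      also have "\<dots> \<longleftrightarrow> e \<in> Y1 \<and> c \<in> Z1" using P by (simp only: E1) simp
      finally show ?thesis .
    qed
    have goal: "{x\<in>carrier (K_cls p E A \<alpha>). \<xi> x \<in> Z} \<in> closed (K_cls p E A \<alpha>)"
      if W: "W \<in> Acl" and Wc: "\<And>e a. e \<in> carrier E \<Longrightarrow> a \<in> Acar \<Longrightarrow> p e = p (\<gamma> a) \<Longrightarrow> (\<xi> (e, a) \<in> Z \<longleftrightarrow> e \<in> Y1 \<and> a \<in> W)" for W
    proof -
      have "{x\<in>pb_carrier p E \<alpha> A. fst x \<in> Y1 \<and> snd x \<in> W} \<in> closed (pb p E \<alpha> A)"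
        by (rule pb_closedI[OF Y1]) (simp add: A_simps W)
      moreover have "{x\<in>pb_carrier p E \<alpha> A. fst x \<in> Y1 \<and> snd x \<in> W} = {x\<in>carrier (K_cls p E A \<alpha>). \<xi> x \<in> Z}"
      proof (rule set_eqI, goal_cases)
        case (1 x) obtain e a where xe: "x = (e, a)" by (cases x)
        show ?case
          using Wc[of e a] Kc[of e a] unfolding xe by (auto simp: K_cls_def A_simps \<alpha>_def)
      qed
      ultimately show ?thesis by (simp add: K_cls_def)
    qed
    from co show "{x\<in>carrier (K_cls p E A \<alpha>). \<xi> x \<in> Z} \<in> closed (K_cls p E A \<alpha>)"
    proof
      assume cm: "closed_mor E B p"
      define W where "W = {a\<in>Acar. \<exists>e\<in>carrier E. p e = p (\<gamma> a) \<and> \<xi> (e, a) \<in> Z}"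
      have "{c\<in>carrier C. c\<in>Z1 \<and> (\<exists>e\<in>carrier E. p e = (p \<circ> \<gamma>) c \<and> e\<in>Y1)} \<in> closed C"
        by (rule descend_closed[OF C_cs E_cs pgm cm Y1 Z1])
      moreover have "{c\<in>carrier C. c\<in>Z1 \<and> (\<exists>e\<in>carrier E. p e = (p \<circ> \<gamma>) c \<and> e\<in>Y1)} = {c\<in>carrier C. q c \<in> W}"
      proof (rule set_eqI)
        fix c show "c \<in> {c\<in>carrier C. c\<in>Z1 \<and> (\<exists>e\<in>carrier E. p e = (p \<circ> \<gamma>) c \<and> e\<in>Y1)} \<longleftrightarrow> c \<in> {c\<in>carrier C. q c \<in> W}"
        proof (cases "c \<in> carrier C")
          case True
          have "q c \<in> W \<longleftrightarrow> (\<exists>e\<in>carrier E. p e = p (\<gamma> c) \<and> \<xi> (e, c) \<in> Z)"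
            unfolding W_def using qA[OF True] qp\<gamma>[OF True] \<xi>q True by auto
          also have "\<dots> \<longleftrightarrow> c\<in>Z1 \<and> (\<exists>e\<in>carrier E. p e = p (\<gamma> c) \<and> e\<in>Y1)"
            using char1 True by auto
          finally show ?thesis using True by simp
        qed simp
      qed
      ultimately have W: "W \<in> Acl" unfolding Acl_def W_def by simp
      show ?thesis
      proof (rule goal[OF W])
        fix e a assume h: "e \<in> carrier E" "a \<in> Acar" "p e = p (\<gamma> a)"
        show "\<xi> (e, a) \<in> Z \<longleftrightarrow> e \<in> Y1 \<and> a \<in> W"
        proof
          assume "\<xi> (e, a) \<in> Z" thus "e \<in> Y1 \<and> a \<in> W" using char1[of e a] h AC unfolding W_def by auto
        next
          assume "e \<in> Y1 \<and> a \<in> W"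
          then obtain e' where "e' \<in> carrier E" "p e' = p (\<gamma> a)" "\<xi> (e', a) \<in> Z" "e \<in> Y1" unfolding W_def by auto
          thus "\<xi> (e, a) \<in> Z" using char1[of e' a] char1[of e a] h AC by auto
        qed
      qed
    next
      assume om: "open_mor E B p"
      have "{x\<in>carrier (pb p E (p \<circ> \<gamma>) C). \<xi> x \<in> Z1} \<in> closed (pb p E (p \<circ> \<gamma>) C)" by (rule cls_morD2[OF \<xi>m Z1])
      hence "{x\<in>pb_carrier p E (p \<circ> \<gamma>) C. \<xi> x \<in> Z1} \<in> closed (pb p E (p \<circ> \<gamma>) C)" by simp
      from pb_closedD[OF E_cs C_cs this] obtain Y2 where Y2: "Y2\<in>closed E"
        and "\<exists>W\<in>closed C. {x\<in>pb_carrier p E (p \<circ> \<gamma>) C. \<xi> x \<in> Z1} = {x\<in>pb_carrier p E (p \<circ> \<gamma>) C. fst x \<in> Y2 \<and> snd x \<in> W}"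
        by (elim bexE) (rule that, assumption, rule bexI)
      then obtain Z2 where Z2: "Z2\<in>closed C"
        and E2: "{x\<in>pb_carrier p E (p \<circ> \<gamma>) C. \<xi> x \<in> Z1} = {x\<in>pb_carrier p E (p \<circ> \<gamma>) C. fst x \<in> Y2 \<and> snd x \<in> Z2}"
        by (elim bexE)
      have char2: "\<xi> (e, c) \<in> Z1 \<longleftrightarrow> e \<in> Y2 \<and> c \<in> Z2" if "e \<in> carrier E" "c \<in> carrier C" "p e = p (\<gamma> c)" for e c
      proof -
        have P: "(e, c) \<in> pb_carrier p E (p \<circ> \<gamma>) C" using that by simp
        have "\<xi> (e, c) \<in> Z1 \<longleftrightarrow> (e, c) \<in> {x\<in>pb_carrier p E (p \<circ> \<gamma>) C. \<xi> x \<in> Z1}" using P by simp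
        also have "\<dots> \<longleftrightarrow> e \<in> Y2 \<and> c \<in> Z2" using P by (simp only: E2) simp
        finally show ?thesis .
      qed
      define W where "W = {a\<in>Acar. \<forall>e\<in>carrier E. p e = p (\<gamma> a) \<longrightarrow> \<xi> (e, a) \<in> Z1}"
      have "{c\<in>carrier C. c\<in>Z2 \<and> (\<forall>e\<in>carrier E. p e = (p \<circ> \<gamma>) c \<longrightarrow> e\<in>Y2)} \<in> closed C"
        by (rule descend_open[OF C_cs E_cs pgm om Y2 Z2])
      moreover have "{c\<in>carrier C. c\<in>Z2 \<and> (\<forall>e\<in>carrier E. p e = (p \<circ> \<gamma>) c \<longrightarrow> e\<in>Y2)} = {c\<in>carrier C. q c \<in> W}"
      proof (rule set_eqI)
        fix c show "c \<in> {c\<in>carrier C. c\<in>Z2 \<and> (\<forall>e\<in>carrier E. p e = (p \<circ> \<gamma>) c \<longrightarrow> e\<in>Y2)} \<longleftrightarrow> c \<in> {c\<in>carrier C. q c \<in> W}"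
        proof (cases "c \<in> carrier C")
          case True
          have "q c \<in> W \<longleftrightarrow> (\<forall>e\<in>carrier E. p e = p (\<gamma> c) \<longrightarrow> \<xi> (e, c) \<in> Z1)"
            unfolding W_def using qA[OF True] qp\<gamma>[OF True] \<xi>q True by auto
          also have "\<dots> \<longleftrightarrow> (\<forall>e\<in>carrier E. p e = p (\<gamma> c) \<longrightarrow> e \<in> Y2 \<and> c \<in> Z2)"
            using char2 True by auto
          also have "\<dots> \<longleftrightarrow> c\<in>Z2 \<and> (\<forall>e\<in>carrier E. p e = p (\<gamma> c) \<longrightarrow> e\<in>Y2)"
            using sc[OF True] by blast
          finally show ?thesis using True by simp
        qed simp
      qed
      ultimately have W: "W \<in> Acl" unfolding Acl_def W_def by simp
      show ?thesis
      proof (rule goal[OF W])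
        fix e a assume h: "e \<in> carrier E" "a \<in> Acar" "p e = p (\<gamma> a)"
        have aC: "a \<in> carrier C" using AC h(2) .
        show "\<xi> (e, a) \<in> Z \<longleftrightarrow> e \<in> Y1 \<and> a \<in> W"
        proof
          assume z: "\<xi> (e, a) \<in> Z"
          hence ey: "e \<in> Y1" using char1[OF h(1) aC h(3)] by simp
          have "\<forall>e'\<in>carrier E. p e' = p (\<gamma> a) \<longrightarrow> \<xi> (e', a) \<in> Z1"
          proof (intro ballI impI)
            fix e' assume e': "e' \<in> carrier E" "p e' = p (\<gamma> a)"
            have c': "\<xi> (e', a) \<in> carrier C" using \<xi>C[OF e'(1) aC e'(2)] .
            have g': "\<gamma> (\<xi> (e', a)) = e'" using \<gamma>\<xi>'[OF e'(1) aC e'(2)] .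
            have "\<xi> (e, \<xi> (e', a)) = \<xi> (e, a)" using coc'[OF h(1) e'(1) aC e'(2)] h(3) e'(2) by simp
            hence "\<xi> (e, \<xi> (e', a)) \<in> Z" using z by simp
            thus "\<xi> (e', a) \<in> Z1" using char1[OF h(1) c'] g' h(3) e'(2) by simp
          qed
          thus "e \<in> Y1 \<and> a \<in> W" using ey h(2) unfolding W_def by simp
        next
          assume ea: "e \<in> Y1 \<and> a \<in> W"
          have "\<xi> (\<gamma> a, a) \<in> Z1" using ea \<gamma>C[OF aC] unfolding W_def by simp
          hence "a \<in> Z1" using unit aC by simp
          thus "\<xi> (e, a) \<in> Z" using char1[OF h(1) aC h(3)] ea by simp
        qed
      qed
    qed
  qed
  have fdm: "descent_mor p E (K_cls p E A \<alpha>) K_gamma K_xi C \<gamma> \<xi> \<xi>"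
    unfolding descent_mor_def
  proof (intro conjI allI impI ballI)
    show "cls_mor (K_cls p E A \<alpha>) C \<xi>" by (rule fcm)
  next
    fix x assume x: "x \<in> carrier (K_cls p E A \<alpha>)"
    obtain e a where xe: "x = (e, a)" by (cases x)
    show "\<gamma> (\<xi> x) = K_gamma x" using x xe Kc \<gamma>\<xi>' AC by (auto simp: K_gamma_def)
  next
    fix e c assume ec: "(e, c) \<in> pb_carrier p E (p \<circ> K_gamma) (K_cls p E A \<alpha>)"
    obtain e' a where ce: "c = (e', a)" by (cases c)
    have h: "e \<in> carrier E" "e' \<in> carrier E" "a \<in> Acar" "p e' = p (\<gamma> a)" "p e = p e'"
      using ec Kc unfolding ce by (auto simp: K_gamma_def)
    show "\<xi> (K_xi (e, c)) = \<xi> (e, \<xi> c)"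
      unfolding ce K_xi_def using coc'[OF h(1,2) AC[OF h(3)] h(4,5)] by simp
  qed
  have hdm: "descent_mor p E C \<gamma> \<xi> (K_cls p E A \<alpha>) K_gamma K_xi h"
    unfolding descent_mor_def
  proof (intro conjI allI impI ballI)
    have "cls_mor C (pb p E \<alpha> A) (\<lambda>c. (\<gamma> c, q c))"
      by (rule cls_mor_into_pb[OF C_cs E_cs A_cs \<gamma>m qm]) (simp add: \<alpha>_def qp\<gamma>)
    thus "cls_mor C (K_cls p E A \<alpha>) h" unfolding K_cls_def h_def[abs_def] .
  next
    fix c assume "c \<in> carrier C" thus "K_gamma (h c) = \<gamma> c" by (simp add: K_gamma_def h_def)
  next
    fix e c assume "(e, c) \<in> pb_carrier p E (p \<circ> \<gamma>) C"
    hence h: "e \<in> carrier E" "c \<in> carrier C" "p e = p (\<gamma> c)" by simp_all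
    show "h (\<xi> (e, c)) = K_xi (e, h c)"
      unfolding h_def K_xi_def using \<gamma>\<xi>'[OF h] q\<xi>[OF h] by simp
  qed
  have inv1: "\<forall>x\<in>carrier (K_cls p E A \<alpha>). h (\<xi> x) = x"
  proof
    fix x assume x: "x \<in> carrier (K_cls p E A \<alpha>)"
    obtain e a where xe: "x = (e, a)" by (cases x)
    have h: "e \<in> carrier E" "a \<in> carrier C" "p e = p (\<gamma> a)" "a \<in> Acar" using x xe Kc AC by auto
    show "h (\<xi> x) = x" unfolding xe h_def using \<gamma>\<xi>'[OF h(1-3)] q\<xi>[OF h(1-3)] qfix[OF h(4)] by simp
  qed
  have inv2: "\<forall>c\<in>carrier C. \<xi> (h c) = c"
  proof
    fix c assume c: "c \<in> carrier C"
    show "\<xi> (h c) = c" unfolding h_def using \<xi>q[OF \<gamma>C[OF c] c refl] unit c by simp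
  qed
  show ?thesis unfolding K_ess_surj_at_def
    by (rule exI[of _ A], rule exI[of _ \<alpha>], rule exI[of _ \<xi>], rule exI[of _ h])
       (intro conjI so fdm hdm inv1 inv2)
qed


theorem theorem6p5:
  fixes p :: "'e \<Rightarrow> 'b" and E :: "'e cls" and B :: "'b cls"
  assumes "closure_space E" and "closure_space B"
    and "cls_mor E B p"
    and "p ` carrier E = carrier B"
    and "closed_mor E B p \<or> open_mor E B p"
  shows "(\<forall>(A :: 'a cls) \<alpha> (A' :: 'a' cls) \<alpha>'. slice_obj B A \<alpha> \<longrightarrow> slice_obj B A' \<alpha>' \<longrightarrow>
            K_full_faithful_at p E B A \<alpha> A' \<alpha>') \<and>
         (\<forall>(C :: 'c cls) \<gamma> \<xi>. descent_data p E C \<gamma> \<xi> \<longrightarrow> K_ess_surj_at p E B C \<gamma> \<xi>)"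
proof (intro conjI allI impI)
  fix A :: "'a cls" and \<alpha> and A' :: "'a' cls" and \<alpha>'
  assume "slice_obj B A \<alpha>" "slice_obj B A' \<alpha>'"
  thus "K_full_faithful_at p E B A \<alpha> A' \<alpha>'" using full_faithful assms(1,3,4,5) by blast
next
  fix C :: "'c cls" and \<gamma> \<xi>
  assume "descent_data p E C \<gamma> \<xi>"
  thus "K_ess_surj_at p E B C \<gamma> \<xi>" using ess_surj assms(1,3,4,5) by blast
qed

end
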